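(* Let $k \ge 2$ be an integer, let $\Pi$ be a $(k-1)\times k$ real matrix whose rows form an orthonormal basis of the orthogonal complement of the all-ones vector in $\mathbb{R}^k$, let $B$ be the $k \times \binom{k}{2}$ matrix whose columns are the vectors $e_i - e_j$ for all pairs $i<j$, and let $G = \Pi B / \sqrt{k}$. Then: (a) every column of $G$ has Euclidean norm $\sqrt{2/k}$; (b) $G G^T = I_{k-1}$; (c) for every real $\binom{k}{2}\times\binom{k}{2}$ diagonal matrix $D$, \[ \| G D G^T \| \geq \frac{1}{k}\sqrt{\frac{2}{k-1}}\, \|D\|_F, \] where $\|\cdot\|$ is the operator norm and $\|D\|_F$ is the Frobenius norm. *)

theory Defs
  imports "HOL-Analysis.Analysis" "Jordan_Normal_Form.Matrix"
begin

definition vnorm :: "real vec \<Rightarrow> real" where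
  "vnorm v = sqrt (v \<bullet> v)"

definition op_norm :: "real mat \<Rightarrow> real" where
  "op_norm A = Sup {vnorm (A *\<^sub>v v) | v. v \<in> carrier_vec (dim_col A) \<and> vnorm v \<le> 1}"

definition frob_norm :: "real mat \<Rightarrow> real" where
  "frob_norm A = sqrt (\<Sum>i<dim_row A. \<Sum>j<dim_col A. (A $$ (i, j))^2)"

definition pairs :: "nat \<Rightarrow> (nat \<times> nat) list" where
  "pairs k = concat (map (\<lambda>i. map (\<lambda>j. (i, j)) [Suc i..<k]) [0..<k])"

definition incB :: "nat \<Rightarrow> real mat" where
  "incB k = mat_of_cols k (map (\<lambda>(i, j). unit_vec k i - unit_vec k j) (pairs k))"

end

theory Submission
  imports Defs
begin


lemma set_pairs: "set (pairs k) = {(i,j). i < j \<and> j < k}"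
  unfolding pairs_def by (auto simp: image_iff)

lemma distinct_pairs: "distinct (pairs k)"
  unfolding pairs_def
  by (intro distinct_concat) (auto simp: distinct_map inj_on_def dest!: arg_cong[where f=length])

lemma card_S: "card {(i,j). i < j \<and> j < (k::nat)} = k choose 2"
proof (induction k)
  case 0 then show ?case by simp
next
  case (Suc k)
  have "{(i,j). i < j \<and> j < Suc k} = {(i,j). i < j \<and> j < k} \<union> (\<lambda>i. (i,k)) ` {..<k}"
    by auto
  moreover have "finite {(i,j). i < j \<and> j < (k::nat)}"
    by (rule finite_subset[of _ "{..<k} \<times> {..<k}"]) auto
  moreover have "card ((\<lambda>i. (i,k)) ` {..<k}) = k" by (subst card_image) (auto simp: inj_on_def)
  moreover have "{(i,j). i < j \<and> j < k} \<inter> (\<lambda>i. (i,k)) ` {..<k} = {}" by auto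
  ultimately have "card {(i,j). i < j \<and> j < Suc k} = (k choose 2) + k"
    using Suc by (simp add: card_Un_disjoint)
  then show ?case by (simp add: numeral_2_eq_2)
qed

lemma length_pairs: "length (pairs k) = k choose 2"
  using distinct_card[OF distinct_pairs, of k] card_S[of k] set_pairs[of k] by simp

lemma sum_pairs: "(\<Sum>a<k choose 2. f (pairs k ! a)) = (\<Sum>p\<in>{(i,j). i < j \<and> j < k}. f p)"
proof -
  have "(\<Sum>a<k choose 2. f (pairs k ! a)) = sum_list (map f (pairs k))"
    by (simp add: sum_list_sum_nth length_pairs atLeast0LessThan)
  also have "\<dots> = sum f (set (pairs k))" by (simp add: sum_list_distinct_conv_sum_set distinct_pairs)
  finally show ?thesis by (simp add: set_pairs)
qed

lemma sym_sum:
  fixes f :: "nat \<Rightarrow> nat \<Rightarrow> real"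
  assumes sym: "\<And>i j. f i j = f j i" and diag: "\<And>i. f i i = 0"
  shows "(\<Sum>p\<in>{(i,j). i < j \<and> j < k}. f (fst p) (snd p)) = (1/2) * (\<Sum>i<k. \<Sum>j<k. f i j)"
proof -
  define S where "S = {(i,j). i < j \<and> j < k}"
  define S' where "S' = {(i,j). j < i \<and> i < k}"
  define T where "T = {(i,j). i = j \<and> i < k}"
  have fin: "finite S" "finite S'" "finite T"
    unfolding S_def S'_def T_def
    by (auto intro: finite_subset[of _ "{..<k} \<times> {..<k}"])
  have U: "{..<k} \<times> {..<k} = S \<union> S' \<union> T" unfolding S_def S'_def T_def by auto
  have "(\<Sum>i<k. \<Sum>j<k. f i j) = (\<Sum>p\<in>{..<k} \<times> {..<k}. f (fst p) (snd p))"
    by (simp add: sum.cartesian_product case_prod_beta')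
  also have "\<dots> = (\<Sum>p\<in>S. f (fst p) (snd p)) + (\<Sum>p\<in>S'. f (fst p) (snd p)) + (\<Sum>p\<in>T. f (fst p) (snd p))"
    unfolding U using fin
    by (subst sum.union_disjoint, simp, simp, force simp: S_def S'_def T_def,
        subst sum.union_disjoint, simp, simp, force simp: S_def S'_def T_def, simp)
  also have "(\<Sum>p\<in>T. f (fst p) (snd p)) = 0" by (rule sum.neutral) (auto simp: T_def diag)
  also have "(\<Sum>p\<in>S'. f (fst p) (snd p)) = (\<Sum>p\<in>S. f (fst p) (snd p))"
    by (rule sum.reindex_bij_witness[where i=prod.swap and j=prod.swap]) (auto simp: S_def S'_def sym)
  finally show ?thesis unfolding S_def by simp
qed

lemma double_diff_sum:
  fixes a b :: "nat \<Rightarrow> real"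
  shows "(\<Sum>i<k. \<Sum>j<k. (a i - a j) * (b i - b j))
       = 2 * real k * (\<Sum>i<k. a i * b i) - 2 * (\<Sum>i<k. a i) * (\<Sum>i<k. b i)"
proof -
  have "(\<Sum>i<k. \<Sum>j<k. (a i - a j) * (b i - b j))
      = (\<Sum>i<k. \<Sum>j<k. a i * b i) - (\<Sum>i<k. \<Sum>j<k. a i * b j) - (\<Sum>i<k. \<Sum>j<k. a j * b i) + (\<Sum>i<k. \<Sum>j<k. a j * b j)"
    by (simp add: algebra_simps sum.distrib sum_subtractf)
  also have "\<dots> = 2 * real k * (\<Sum>i<k. a i * b i) - 2 * (\<Sum>i<k. a i) * (\<Sum>i<k. b i)"
    apply (simp add: sum_product[symmetric] sum.swap[of "\<lambda>i j. a j * b i"] mult.commute sum_distrib_left[symmetric])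
    apply (simp add: sum_distrib_right)
    done
  finally show ?thesis .
qed

lemma expand_sq_sum:
  fixes G :: "nat \<Rightarrow> nat \<Rightarrow> real"
  shows "(\<Sum>s<n. \<Sum>t<n. (\<Sum>a<m. G s a * d a * G t a)^2)
       = (\<Sum>a<m. \<Sum>b<m. d a * d b * (\<Sum>s<n. G s a * G s b)^2)"
proof -
  have "(\<Sum>s<n. \<Sum>t<n. (\<Sum>a<m. G s a * d a * G t a)^2)
      = (\<Sum>s<n. \<Sum>t<n. \<Sum>a<m. \<Sum>b<m. d a * d b * ((G s a * G s b) * (G t a * G t b)))"
    unfolding power2_eq_square sum_product by (intro sum.cong refl) (simp add: ac_simps)
  also have "\<dots> = (\<Sum>a<m. \<Sum>b<m. \<Sum>s<n. \<Sum>t<n. d a * d b * ((G s a * G s b) * (G t a * G t b)))"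
    by (simp only: sum.swap[of _ "{..<m}" "{..<n}"])
  also have "\<dots> = (\<Sum>a<m. \<Sum>b<m. d a * d b * (\<Sum>s<n. G s a * G s b)^2)"
    unfolding power2_eq_square sum_product sum_distrib_left by (intro sum.cong refl) (simp add: ac_simps sum_distrib_left)
  finally show ?thesis .
qed

lemma quad_form:
  fixes u :: "nat \<Rightarrow> nat \<Rightarrow> real"
  shows "(\<Sum>a<m. \<Sum>b<m. d a * d b * (2 * (if a = b then 1 else 0) + (\<Sum>x<k. u a x * u b x)))
       = 2 * (\<Sum>a<m. (d a)^2) + (\<Sum>x<k. (\<Sum>a<m. d a * u a x)^2)"
proof -
  have "(\<Sum>a<m. \<Sum>b<m. d a * d b * (2 * (if a = b then 1 else 0) + (\<Sum>x<k. u a x * u b x)))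
     = (\<Sum>a<m. \<Sum>b<m. d a * d b * (2 * (if a = b then 1 else 0))) + (\<Sum>a<m. \<Sum>b<m. \<Sum>x<k. d a * d b * (u a x * u b x))"
    by (simp add: distrib_left sum.distrib sum_distrib_left)
  also have "(\<Sum>a<m. \<Sum>b<m. d a * d b * (2 * (if a = b then 1 else 0))) = 2 * (\<Sum>a<m. (d a)^2)"
    by (simp add: sum_distrib_left power2_eq_square if_distrib[of "\<lambda>x. _ * x"] cong: if_cong)
      (rule sum.cong, auto)
  also have "(\<Sum>a<m. \<Sum>b<m. \<Sum>x<k. d a * d b * (u a x * u b x)) = (\<Sum>x<k. (\<Sum>a<m. d a * u a x)^2)"
  proof -
    have "(\<Sum>a<m. \<Sum>b<m. \<Sum>x<k. d a * d b * (u a x * u b x)) = (\<Sum>a<m. \<Sum>x<k. \<Sum>b<m. d a * d b * (u a x * u b x))"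
      by (rule sum.cong, rule refl, rule sum.swap)
    also have "\<dots> = (\<Sum>x<k. \<Sum>a<m. \<Sum>b<m. d a * d b * (u a x * u b x))" by (rule sum.swap)
    also have "\<dots> = (\<Sum>x<k. (\<Sum>a<m. d a * u a x)^2)"
      unfolding power2_eq_square sum_product by (intro sum.cong refl) (simp add: ac_simps)
    finally show ?thesis .
  qed
  finally show ?thesis .
qed


lemma sum_vec_sq: "(v::real vec) \<bullet> v = (\<Sum>j<dim_vec v. (v $ j)^2)"
  unfolding scalar_prod_def atLeast0LessThan power2_eq_square by (rule refl)

lemma op_norm_frob:
  fixes A :: "real mat"
  assumes A: "A \<in> carrier_mat n n'" and n': "n' > 0"
  shows "(\<Sum>i<n. \<Sum>j<n'. (A$$(i,j))^2) \<le> real n' * (op_norm A)^2 \<and> op_norm A \<ge> 0"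
proof -
  define Sset where "Sset = {vnorm (A *\<^sub>v v) | v. v \<in> carrier_vec (dim_col A) \<and> vnorm v \<le> 1}"
  have opd: "op_norm A = Sup Sset" unfolding op_norm_def Sset_def ..
  define R where "R = sqrt (\<Sum>i<n. (\<Sum>j<n'. \<bar>A$$(i,j)\<bar>)^2)"
  have bdd: "bdd_above Sset"
  proof (rule bdd_aboveI[of _ R])
    fix y assume "y \<in> Sset"
    then obtain v where v: "v \<in> carrier_vec n'" "vnorm v \<le> 1" and y: "y = vnorm (A *\<^sub>v v)"
      using A unfolding Sset_def by auto
    have vv: "(\<Sum>j<n'. (v $ j)^2) \<le> 1"
      using v by (simp add: vnorm_def sum_vec_sq)
    have vj: "\<bar>v $ j\<bar> \<le> 1" if "j < n'" for j
    proof -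
      have "(v $ j)^2 \<le> (\<Sum>j<n'. (v $ j)^2)"
        by (rule member_le_sum) (use that in auto)
      with vv have "(v $ j)^2 \<le> 1" by simp
      then show ?thesis by (simp add: abs_square_le_1)
    qed
    have ent: "((A *\<^sub>v v) $ i)^2 \<le> (\<Sum>j<n'. \<bar>A$$(i,j)\<bar>)^2" if "i < n" for i
    proof -
      have "(A *\<^sub>v v) $ i = (\<Sum>j<n'. A$$(i,j) * v $ j)"
        using A v that by (simp add: scalar_prod_def atLeast0LessThan)
      also have "\<bar>\<dots>\<bar> \<le> (\<Sum>j<n'. \<bar>A$$(i,j) * v $ j\<bar>)" by (rule sum_abs)
      also have "\<dots> \<le> (\<Sum>j<n'. \<bar>A$$(i,j)\<bar>)"
        by (rule sum_mono) (auto simp: abs_mult intro: mult_left_le[OF vj])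
      finally have "\<bar>(A *\<^sub>v v) $ i\<bar> \<le> (\<Sum>j<n'. \<bar>A$$(i,j)\<bar>)" .
      then show ?thesis by (metis abs_ge_zero power2_abs power_mono)
    qed
    have "y = sqrt (\<Sum>i<n. ((A *\<^sub>v v) $ i)^2)" using y A by (simp add: vnorm_def sum_vec_sq)
    also have "\<dots> \<le> R" unfolding R_def by (rule real_sqrt_le_mono, rule sum_mono) (use ent in auto)
    finally show "y \<le> R" .
  qed
  have col: "(\<Sum>i<n. (A$$(i,t))^2) \<le> (op_norm A)^2 \<and> 0 \<le> op_norm A" if t: "t < n'" for t
  proof -
    have Av: "A *\<^sub>v unit_vec n' t = vec n (\<lambda>i. A$$(i,t))"
    proof (rule eq_vecI)
      fix i assume "i < dim_vec (vec n (\<lambda>i. A$$(i,t)))"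
      then have i: "i < n" by simp
      have "(A *\<^sub>v unit_vec n' t) $ i = (\<Sum>j\<in>{0..<n'}. A$$(i,j) * (if j = t then 1 else 0))"
        using A i by (simp add: scalar_prod_def, intro sum.cong refl) (use A i t in auto)
      also have "\<dots> = A$$(i,t)" using t by (simp add: if_distrib[of "\<lambda>x. _ * x"] cong: if_cong)
      finally show "(A *\<^sub>v unit_vec n' t) $ i = vec n (\<lambda>i. A$$(i,t)) $ i" using i by simp
    qed (use A in simp)
    have un: "vnorm (unit_vec n' t) = 1"
    proof -
      have "(unit_vec n' t :: real vec) \<bullet> unit_vec n' t = (\<Sum>j\<in>{0..<n'}. (if j = t then 1 else 0) * (if j = t then 1 else 0))"
        unfolding scalar_prod_def by (intro sum.cong) (use t in auto)
      also have "\<dots> = 1" using t by (simp add: if_distrib[of "\<lambda>x. _ * x"] cong: if_cong)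
      finally show ?thesis by (simp add: vnorm_def)
    qed
    have mem: "vnorm (vec n (\<lambda>i. A$$(i,t))) \<in> Sset"
      unfolding Sset_def using A un Av[symmetric] by (auto intro!: exI[of _ "unit_vec n' t"])
    have le: "vnorm (vec n (\<lambda>i. A$$(i,t))) \<le> op_norm A" unfolding opd by (rule cSup_upper[OF mem bdd])
    have nn: "0 \<le> vnorm (vec n (\<lambda>i. A$$(i,t)))"
      unfolding vnorm_def by (simp add: sum_vec_sq sum_nonneg)
    have "(\<Sum>i<n. (A$$(i,t))^2) = (vnorm (vec n (\<lambda>i. A$$(i,t))))^2"
      unfolding vnorm_def by (simp add: sum_vec_sq sum_nonneg)
    also have "\<dots> \<le> (op_norm A)^2" using le nn by (simp add: power_mono)
    finally show ?thesis using le nn by simp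
  qed
  have "(\<Sum>i<n. \<Sum>j<n'. (A$$(i,j))^2) = (\<Sum>j<n'. \<Sum>i<n. (A$$(i,j))^2)" by (rule sum.swap)
  also have "\<dots> \<le> (\<Sum>j<n'. (op_norm A)^2)" by (rule sum_mono) (use col in auto)
  finally show ?thesis using col[OF n'] by simp
qed



lemma comb_id:
  fixes i j p q k :: nat
  assumes "i < j" "j < k" "p < q" "q < k"
  shows "((if i = p then 1 else 0) - (if i = q then 1 else 0) - (if j = p then 1 else 0) + (if j = q then 1 else 0) :: real)^2
       = 2 * (if (i,j) = (p,q) then 1 else 0) + (\<Sum>x<k. ((if x = i then 1 else 0) + (if x = j then 1 else 0)) * ((if x = p then 1 else 0) + (if x = q then 1 else 0)))"
proof -
  have "(\<Sum>x<k. ((if x = i then 1 else 0) + (if x = j then 1 else 0)) * ((if x = p then 1 else 0) + (if x = q then 1 else 0)) :: real)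
      = (\<Sum>x<k. (if x = i then (if i = p then 1 else 0) + (if i = q then 1 else 0) else 0))
      + (\<Sum>x<k. (if x = j then (if j = p then 1 else 0) + (if j = q then 1 else 0) else 0))"
    by (simp add: distrib_right sum.distrib if_distrib[of "\<lambda>x. x * _"] cong: if_cong)
  also have "\<dots> = (if i = p then 1 else 0) + (if i = q then 1 else 0) + (if j = p then 1 else 0) + (if j = q then 1 else 0)"
    using assms by simp
  finally show ?thesis using assms by auto
qed

theorem lemma10:
  fixes k :: nat and P :: "real mat"
  assumes k2: "k \<ge> 2"
    and Pcar: "P \<in> carrier_mat (k - 1) k"
    and orthonormal: "\<forall>i < k - 1. \<forall>j < k - 1. row P i \<bullet> row P j = (if i = j then 1 else 0)"
    and perp_ones: "\<forall>i < k - 1. row P i \<bullet> vec k (\<lambda>_. 1) = 0"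
    and spans: "\<forall>v \<in> carrier_vec k. v \<bullet> vec k (\<lambda>_. 1) = 0 \<longrightarrow>
                   (\<exists>c \<in> carrier_vec (k - 1). v = transpose_mat P *\<^sub>v c)"
  defines "G \<equiv> (1 / sqrt (real k)) \<cdot>\<^sub>m (P * incB k)"
  shows "(\<forall>j < k choose 2. vnorm (col G j) = sqrt (2 / real k))
       \<and> G * transpose_mat G = 1\<^sub>m (k - 1)
       \<and> (\<forall>D \<in> carrier_mat (k choose 2) (k choose 2). diagonal_mat D \<longrightarrow>
            op_norm (G * D * transpose_mat G)
              \<ge> (1 / real k) * sqrt (2 / (real k - 1)) * frob_norm D)"
proof -
  define m where "m = k choose 2"
  have kpos: "real k > 0" using k2 by simp
  have Pd: "dim_row P = k - 1" "dim_col P = k" using Pcar by auto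
  have orth': "(\<Sum>z<k. P$$(i,z) * P$$(j,z)) = (if i = j then 1 else 0)" if "i < k - 1" "j < k - 1" for i j
  proof -
    have "row P i \<bullet> row P j = (\<Sum>z<k. P$$(i,z) * P$$(j,z))"
      using that Pd by (simp add: scalar_prod_def atLeast0LessThan; (intro sum.cong refl)?; use Pd that in auto)
    then show ?thesis using orthonormal that by simp
  qed
  have perp': "(\<Sum>z<k. P$$(i,z)) = 0" if "i < k - 1" for i
  proof -
    have "row P i \<bullet> vec k (\<lambda>_. 1) = (\<Sum>z<k. P$$(i,z))"
      using that Pd by (simp add: scalar_prod_def atLeast0LessThan; (intro sum.cong refl)?; use Pd that in auto)
    then show ?thesis using perp_ones that by simp
  qed
  have Q: "(\<Sum>s<k-1. P$$(s,x) * P$$(s,y)) = (if x = y then 1 else 0) - 1 / real k" if xy: "x < k" "y < k" for x y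
  proof -
    define v :: "real vec" where "v = vec k (\<lambda>z. (if z = y then 1 else 0) - 1 / real k)"
    have vc: "v \<in> carrier_vec k" unfolding v_def by simp
    have "v \<bullet> vec k (\<lambda>_. 1) = (\<Sum>z<k. (if z = y then 1 else 0) - 1 / real k)"
      unfolding v_def by (simp add: scalar_prod_def atLeast0LessThan)
    also have "\<dots> = 0" using xy kpos by (simp add: sum_subtractf)
    finally obtain c where c: "c \<in> carrier_vec (k-1)" "v = transpose_mat P *\<^sub>v c"
      using spans vc by blast
    have vz: "v $ z = (\<Sum>t<k-1. P$$(t,z) * c $ t)" if "z < k" for z
      using c that Pd by (simp add: scalar_prod_def atLeast0LessThan; (intro sum.cong refl)?; use Pd that in auto)
    have cs: "c $ s = P$$(s,y)" if s: "s < k - 1" for s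
    proof -
      have "(\<Sum>z<k. P$$(s,z) * v $ z) = (\<Sum>z<k. P$$(s,z) * (if z = y then 1 else 0)) - (\<Sum>z<k. P$$(s,z)) / real k"
        unfolding v_def by (simp add: algebra_simps sum_subtractf sum_divide_distrib)
      also have "\<dots> = P$$(s,y)" using perp'[OF s] xy by (simp add: if_distrib[of "\<lambda>x. _ * x"] cong: if_cong)
      finally have 1: "(\<Sum>z<k. P$$(s,z) * v $ z) = P$$(s,y)" .
      have "(\<Sum>z<k. P$$(s,z) * v $ z) = (\<Sum>z<k. \<Sum>t<k-1. c $ t * (P$$(s,z) * P$$(t,z)))"
        by (intro sum.cong refl) (simp add: vz sum_distrib_left ac_simps)
      also have "\<dots> = (\<Sum>t<k-1. c $ t * (\<Sum>z<k. P$$(s,z) * P$$(t,z)))"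
        by (subst sum.swap) (simp add: sum_distrib_left)
      also have "\<dots> = (\<Sum>t<k-1. c $ t * (if s = t then 1 else 0))"
        by (rule sum.cong[OF refl], subst orth'[OF s]) auto
      also have "\<dots> = c $ s" using s by (simp add: if_distrib[of "\<lambda>x. _ * x"] cong: if_cong)
      finally show ?thesis using 1 by simp
    qed
    have "v $ x = (\<Sum>t<k-1. P$$(t,x) * P$$(t,y))" using vz[OF xy(1)] cs by simp
    then show ?thesis unfolding v_def using xy by (simp add: mult.commute)
  qed
  have pij: "fst (pairs k ! a) < snd (pairs k ! a) \<and> snd (pairs k ! a) < k" if "a < m" for a
  proof -
    have "pairs k ! a \<in> set (pairs k)" using that by (simp add: m_def length_pairs)
    then show ?thesis by (auto simp: set_pairs)
  qed
  have Bd: "dim_row (incB k) = k" "dim_col (incB k) = m" by (auto simp: incB_def length_pairs m_def)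
  have Bent: "incB k $$ (z,a) = (if z = fst (pairs k ! a) then 1 else 0) - (if z = snd (pairs k ! a) then 1 else 0)"
    if "z < k" "a < m" for z a
    using that pij[OF that(2)]
    by (simp add: incB_def mat_of_cols_index length_pairs m_def case_prod_beta)
  have Gd: "dim_row G = k - 1" "dim_col G = m" unfolding G_def using Pd Bd by auto
  have Gent: "G $$ (s,a) = (P$$(s, fst (pairs k ! a)) - P$$(s, snd (pairs k ! a))) / sqrt (real k)"
    if s: "s < k - 1" and a: "a < m" for s a
  proof -
    have "(P * incB k) $$ (s,a) = (\<Sum>z<k. P$$(s,z) * ((if z = fst (pairs k ! a) then 1 else 0) - (if z = snd (pairs k ! a) then 1 else 0)))"
      using s a Pd Bd by (simp add: scalar_prod_def atLeast0LessThan; (intro sum.cong refl)?; use Pd Bd s a Bent in auto)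
    also have "\<dots> = P$$(s, fst (pairs k ! a)) - P$$(s, snd (pairs k ! a))"
      using pij[OF a] by (simp add: right_diff_distrib sum_subtractf if_distrib[of "\<lambda>x. _ * x"] cong: if_cong)
    finally show ?thesis unfolding G_def using s a Pd Bd by simp
  qed
  define dl where "dl = (\<lambda>a b. (if fst (pairs k ! a) = fst (pairs k ! b) then 1 else 0)
      - (if fst (pairs k ! a) = snd (pairs k ! b) then 1 else 0)
      - (if snd (pairs k ! a) = fst (pairs k ! b) then 1 else 0)
      + (if snd (pairs k ! a) = snd (pairs k ! b) then 1 else 0) :: real)"
  have gram: "(\<Sum>s<k-1. G$$(s,a) * G$$(s,b)) = dl a b / real k" if a: "a < m" and b: "b < m" for a b
  proof -
    let ?i = "fst (pairs k ! a)" and ?j = "snd (pairs k ! a)" and ?p = "fst (pairs k ! b)" and ?q = "snd (pairs k ! b)"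
    have "(\<Sum>s<k-1. G$$(s,a) * G$$(s,b)) = (\<Sum>s<k-1. (P$$(s,?i) - P$$(s,?j)) * (P$$(s,?p) - P$$(s,?q))) / real k"
      by (simp add: Gent a b sum_divide_distrib) 
    also have "(\<Sum>s<k-1. (P$$(s,?i) - P$$(s,?j)) * (P$$(s,?p) - P$$(s,?q)))
      = (\<Sum>s<k-1. P$$(s,?i) * P$$(s,?p)) - (\<Sum>s<k-1. P$$(s,?i) * P$$(s,?q)) - (\<Sum>s<k-1. P$$(s,?j) * P$$(s,?p)) + (\<Sum>s<k-1. P$$(s,?j) * P$$(s,?q))"
      by (simp add: algebra_simps sum.distrib sum_subtractf)
    also have "\<dots> = dl a b"
    proof -
      have bd: "?i < k" "?j < k" "?p < k" "?q < k" using pij[OF a] pij[OF b] by auto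
      show ?thesis unfolding dl_def
        by (simp only: Q[OF bd(1) bd(3)] Q[OF bd(1) bd(4)] Q[OF bd(2) bd(3)] Q[OF bd(2) bd(4)])
    qed
    finally show ?thesis .
  qed
  have partA: "\<forall>j < k choose 2. vnorm (col G j) = sqrt (2 / real k)"
  proof (intro allI impI)
    fix a assume "a < k choose 2"
    then have a: "a < m" by (simp add: m_def)
    have "col G a \<bullet> col G a = (\<Sum>s<k-1. G$$(s,a) * G$$(s,a))"
      using a Gd by (simp add: scalar_prod_def atLeast0LessThan)
    also have "\<dots> = 2 / real k" using gram[OF a a] pij[OF a] by (simp add: dl_def)
    finally show "vnorm (col G a) = sqrt (2 / real k)" by (simp add: vnorm_def)
  qed
  have partB: "G * transpose_mat G = 1\<^sub>m (k - 1)"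
  proof (rule eq_matI)
    fix s t assume "s < dim_row (1\<^sub>m (k - 1) :: real mat)" "t < dim_col (1\<^sub>m (k - 1) :: real mat)"
    then have s: "s < k - 1" and t: "t < k - 1" by auto
    define f where "f = (\<lambda>i j. (P$$(s,i) - P$$(s,j)) * (P$$(t,i) - P$$(t,j)))"
    have "(G * transpose_mat G) $$ (s,t) = (\<Sum>a<m. G$$(s,a) * G$$(t,a))"
      using s t Gd by (simp add: scalar_prod_def atLeast0LessThan; (intro sum.cong refl)?; use Gd s t in auto)
    also have "\<dots> = (\<Sum>a<m. f (fst (pairs k ! a)) (snd (pairs k ! a))) / real k"
      unfolding sum_divide_distrib by (rule sum.cong[OF refl]) (simp add: Gent[OF s] Gent[OF t] f_def)
    also have "(\<Sum>a<m. f (fst (pairs k ! a)) (snd (pairs k ! a))) = (\<Sum>p\<in>{(i,j). i < j \<and> j < k}. f (fst p) (snd p))"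
      unfolding m_def by (rule sum_pairs)
    also have "\<dots> = (1/2) * (\<Sum>i<k. \<Sum>j<k. f i j)"
      by (rule sym_sum) (auto simp: f_def algebra_simps)
    also have "(\<Sum>i<k. \<Sum>j<k. f i j) = 2 * real k * (\<Sum>i<k. P$$(s,i) * P$$(t,i)) - 2 * (\<Sum>i<k. P$$(s,i)) * (\<Sum>i<k. P$$(t,i))"
      unfolding f_def by (rule double_diff_sum)
    finally show "(G * transpose_mat G) $$ (s,t) = 1\<^sub>m (k - 1) $$ (s,t)"
      using s t kpos by (simp add: orth' perp')
  qed (use Gd in auto)
  have partC: "op_norm (G * D * transpose_mat G) \<ge> (1 / real k) * sqrt (2 / (real k - 1)) * frob_norm D"
    if Dc: "D \<in> carrier_mat (k choose 2) (k choose 2)" and Ddiag: "diagonal_mat D" for D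
  proof -
    define d where "d = (\<lambda>a. D $$ (a,a))"
    have Dd: "dim_row D = m" "dim_col D = m" using Dc by (auto simp: m_def)
    have Dent: "D $$ (a,b) = (if a = b then d a else 0)" if "a < m" "b < m" for a b
      using Ddiag that Dd unfolding diagonal_mat_def d_def by auto
    define M where "M = G * D * transpose_mat G"
    have Md: "M \<in> carrier_mat (k-1) (k-1)" unfolding M_def using Gd Dd by auto
    have GD: "(G * D) $$ (s,b) = G$$(s,b) * d b" if "s < k - 1" "b < m" for s b
    proof -
      have "(G * D) $$ (s,b) = (\<Sum>a<m. G$$(s,a) * (if a = b then d b else 0))"
        using that Gd Dd by (simp add: scalar_prod_def atLeast0LessThan; (intro sum.cong refl)?; use that Gd Dd Dent in auto)
      also have "\<dots> = G$$(s,b) * d b" using that by (simp add: if_distrib[of "\<lambda>x. _ * x"] cong: if_cong)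
      finally show ?thesis .
    qed
    have Ment: "M $$ (s,t) = (\<Sum>b<m. G$$(s,b) * d b * G$$(t,b))" if st: "s < k - 1" "t < k - 1" for s t
    proof -
      have "M $$ (s,t) = row (G*D) s \<bullet> col (transpose_mat G) t" unfolding M_def using st Gd Dd by simp
      also have "\<dots> = (\<Sum>b<m. (G*D)$$(s,b) * G$$(t,b))"
        unfolding scalar_prod_def atLeast0LessThan by (intro sum.cong) (use st Gd Dd in auto)
      also have "\<dots> = (\<Sum>b<m. G$$(s,b) * d b * G$$(t,b))"
        by (rule sum.cong[OF refl], subst GD[OF st(1)]) auto
      finally show ?thesis .
    qed
    have fD: "frob_norm D = sqrt (\<Sum>a<m. (d a)^2)"
    proof -
      have "(\<Sum>a<m. \<Sum>b<m. (D$$(a,b))^2) = (\<Sum>a<m. \<Sum>b<m. (if a = b then (d a)^2 else 0))"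
        by (intro sum.cong refl) (simp add: Dent)
      also have "\<dots> = (\<Sum>a<m. (d a)^2)" by simp
      finally show ?thesis unfolding frob_norm_def Dd by simp
    qed
    define u where "u = (\<lambda>a x. ((if x = fst (pairs k ! a) then 1 else 0) + (if x = snd (pairs k ! a) then 1 else 0)) :: real)"
    have dl2: "(dl a b)^2 = 2 * (if a = b then 1 else 0) + (\<Sum>x<k. u a x * u b x)" if a: "a < m" and b: "b < m" for a b
    proof -
      have eq: "(pairs k ! a = pairs k ! b) = (a = b)"
        using a b distinct_pairs[of k] by (simp add: nth_eq_iff_index_eq length_pairs m_def)
      have "(fst (pairs k ! a), snd (pairs k ! a)) = (fst (pairs k ! b), snd (pairs k ! b)) \<longleftrightarrow> a = b"
        using eq by simp
      then show ?thesis unfolding dl_def u_def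
        using comb_id[of "fst (pairs k ! a)" "snd (pairs k ! a)" k "fst (pairs k ! b)" "snd (pairs k ! b)"] pij[OF a] pij[OF b]
        by simp
    qed
    have "(\<Sum>s<k-1. \<Sum>t<k-1. (M$$(s,t))^2) = (\<Sum>s<k-1. \<Sum>t<k-1. (\<Sum>b<m. G$$(s,b) * d b * G$$(t,b))^2)"
      by (intro sum.cong refl) (simp add: Ment)
    also have "\<dots> = (\<Sum>a<m. \<Sum>b<m. d a * d b * (\<Sum>s<k-1. G$$(s,a) * G$$(s,b))^2)"
      by (rule expand_sq_sum)
    also have "\<dots> = (\<Sum>a<m. \<Sum>b<m. d a * d b * (2 * (if a = b then 1 else 0) + (\<Sum>x<k. u a x * u b x))) / (real k)^2"
    proof -
      have e: "d a * d b * (\<Sum>s<k-1. G$$(s,a) * G$$(s,b))^2 = d a * d b * (2 * (if a = b then 1 else 0) + (\<Sum>x<k. u a x * u b x)) / (real k)^2"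
        if "a < m" "b < m" for a b
        using gram[OF that] dl2[OF that] by (simp add: power_divide)
      show ?thesis unfolding sum_divide_distrib by (rule sum.cong[OF refl])+ (rule e; simp)
    qed
    also have "\<dots> = (2 * (\<Sum>a<m. (d a)^2) + (\<Sum>x<k. (\<Sum>a<m. d a * u a x)^2)) / (real k)^2"
      by (simp only: quad_form)
    also have "\<dots> \<ge> 2 * (\<Sum>a<m. (d a)^2) / (real k)^2"
      by (intro divide_right_mono) (auto intro: sum_nonneg)
    finally have lowM: "2 * (\<Sum>a<m. (d a)^2) / (real k)^2 \<le> (\<Sum>s<k-1. \<Sum>t<k-1. (M$$(s,t))^2)" .
    have k1: "k - 1 > 0" using k2 by simp
    from op_norm_frob[OF Md k1]
    have opb: "(\<Sum>s<k-1. \<Sum>t<k-1. (M$$(s,t))^2) \<le> real (k-1) * (op_norm M)^2" and op0: "op_norm M \<ge> 0" by auto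
    have rk: "real (k - 1) = real k - 1" using k2 by simp
    have rk1: "real k - 1 > 0" using k2 by simp
    have "2 * (\<Sum>a<m. (d a)^2) / (real k)^2 \<le> (real k - 1) * (op_norm M)^2" using lowM opb rk by simp
    then have key: "2 / ((real k)^2 * (real k - 1)) * (\<Sum>a<m. (d a)^2) \<le> (op_norm M)^2"
      using rk1 kpos by (simp add: field_simps)
    have "(1 / real k) * sqrt (2 / (real k - 1)) * frob_norm D = sqrt (2 / ((real k)^2 * (real k - 1)) * (\<Sum>a<m. (d a)^2))"
      unfolding fD using kpos by (simp add: real_sqrt_mult real_sqrt_divide)
    also have "\<dots> \<le> sqrt ((op_norm M)^2)" using key by (rule real_sqrt_le_mono)
    also have "\<dots> = op_norm M" using op0 by simp
    finally show ?thesis unfolding M_def .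
  qed
  show ?thesis using partA partB partC by blast
qed


end
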